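(* Let $G$ be a group generated by $x_1,\dots,x_n$, with finite commutator subgroup $C=[G,G]$, such that $G/C$ is free abelian of rank $n$ with basis the images of $x_1,\dots,x_n$, and let $\Lambda\subseteq G$ be a generating set of $G$ closed under inversion. Then every element of $C$ can be written as a finite product of links $l_{\mathbf r,\lambda}$ with $\mathbf r\in\mathbb Z^n$ and $\lambda\in\Lambda$.
   Context: Notation: $\bar g=g^{-1}$. For $\mathbf r\in\mathbb Z^n$ put $g_{\mathbf r}=x_1^{r_1}\cdots x_n^{r_n}$. Every $g\in G$ decomposes uniquely as $g=g_{\mathbf r}c$ with $c\in C$; write $\mathbf r_g=\mathbf r$. The link is $l_{\mathbf r,\lambda}=\overline{g_{\mathbf r+\mathbf r_\lambda}}\,\lambda\,g_{\mathbf r}\in C$. *)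

theory Defs
  imports "HOL-Algebra.Algebra"
begin

text \<open>Integer vectors r in Z^n, represented as functions nat => int supported on {..<n}.\<close>
definition intvecs :: "nat \<Rightarrow> (nat \<Rightarrow> int) set" where
  "intvecs n = {r. \<forall>i. n \<le> i \<longrightarrow> r i = 0}"

text \<open>g_r = x_0^(r_0) * ... * x_(n-1)^(r_(n-1)) (indices shifted to start at 0).\<close>
definition gvec :: "('a, 'b) monoid_scheme \<Rightarrow> nat \<Rightarrow> (nat \<Rightarrow> 'a) \<Rightarrow> (nat \<Rightarrow> int) \<Rightarrow> 'a" where
  "gvec G n x r = foldr (\<lambda>i acc. (x i [^]\<^bsub>G\<^esub> r i) \<otimes>\<^bsub>G\<^esub> acc) [0..<n] \<one>\<^bsub>G\<^esub>"

text \<open>r_g: the unique r in Z^n with g = g_r c, c in C.\<close>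
definition rvec :: "('a, 'b) monoid_scheme \<Rightarrow> nat \<Rightarrow> (nat \<Rightarrow> 'a) \<Rightarrow> 'a set \<Rightarrow> 'a \<Rightarrow> (nat \<Rightarrow> int)" where
  "rvec G n x C g = (THE r. r \<in> intvecs n \<and> inv\<^bsub>G\<^esub> (gvec G n x r) \<otimes>\<^bsub>G\<^esub> g \<in> C)"

definition link :: "('a, 'b) monoid_scheme \<Rightarrow> nat \<Rightarrow> (nat \<Rightarrow> 'a) \<Rightarrow> 'a set \<Rightarrow> (nat \<Rightarrow> int) \<Rightarrow> 'a \<Rightarrow> 'a" where
  "link G n x C r lam =
     inv\<^bsub>G\<^esub> (gvec G n x (\<lambda>i. r i + rvec G n x C lam i)) \<otimes>\<^bsub>G\<^esub> lam \<otimes>\<^bsub>G\<^esub> gvec G n x r"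

end

theory Submission
  imports Defs
begin

lemma foldr_pow_carr:
  assumes "group G" "\<forall>i\<in>set is. x i \<in> carrier G"
  shows "foldr (\<lambda>i acc. (x i [^]\<^bsub>G\<^esub> (r i::int)) \<otimes>\<^bsub>G\<^esub> acc) is \<one>\<^bsub>G\<^esub> \<in> carrier G"
  using assms(2)
proof (induction "is")
  case Nil then show ?case using group.is_monoid[OF assms(1)] by (simp add: monoid.one_closed)
next
  case (Cons a as) then show ?case using assms(1) by (simp add: group.int_pow_closed monoid.m_closed group.is_monoid)
qed

lemma foldr_pow_hom:
  assumes "group G" "group H" "h \<in> hom G H" "\<forall>i\<in>set is. x i \<in> carrier G"
  shows "h (foldr (\<lambda>i acc. (x i [^]\<^bsub>G\<^esub> (r i::int)) \<otimes>\<^bsub>G\<^esub> acc) is \<one>\<^bsub>G\<^esub>)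
       = foldr (\<lambda>i acc. (h (x i) [^]\<^bsub>H\<^esub> (r i::int)) \<otimes>\<^bsub>H\<^esub> acc) is \<one>\<^bsub>H\<^esub>"
  using assms(4)
proof (induction "is")
  case Nil then show ?case using assms
    by (simp add: group_hom.hom_one group_hom_axioms.intro group_hom_def)
next
  case (Cons a as)
  have gh: "group_hom G H h" using assms by (simp add: group_hom_axioms.intro group_hom_def)
  have "foldr (\<lambda>i acc. (x i [^]\<^bsub>G\<^esub> (r i::int)) \<otimes>\<^bsub>G\<^esub> acc) as \<one>\<^bsub>G\<^esub> \<in> carrier G"
    using foldr_pow_carr[OF assms(1), of as x r] Cons.prems by simp
  then show ?case using Cons gh assms(1)
    by (simp add: group_hom.hom_int_pow group.int_pow_closed hom_mult[OF assms(3)])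
qed

lemma foldr_pow_zero:
  assumes "monoid H"
  shows "foldr (\<lambda>i acc. (y i [^]\<^bsub>H\<^esub> (0::int)) \<otimes>\<^bsub>H\<^esub> acc) is \<one>\<^bsub>H\<^esub> = \<one>\<^bsub>H\<^esub>"
  by (induction "is") (simp_all add: monoid.l_one[OF assms] monoid.one_closed[OF assms])

lemma foldr_pow_add:
  assumes "comm_group H" "\<forall>i\<in>set is. y i \<in> carrier H"
  shows "foldr (\<lambda>i acc. (y i [^]\<^bsub>H\<^esub> (r i + s i::int)) \<otimes>\<^bsub>H\<^esub> acc) is \<one>\<^bsub>H\<^esub>
       = foldr (\<lambda>i acc. (y i [^]\<^bsub>H\<^esub> (r i::int)) \<otimes>\<^bsub>H\<^esub> acc) is \<one>\<^bsub>H\<^esub>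
         \<otimes>\<^bsub>H\<^esub> foldr (\<lambda>i acc. (y i [^]\<^bsub>H\<^esub> (s i::int)) \<otimes>\<^bsub>H\<^esub> acc) is \<one>\<^bsub>H\<^esub>"
  using assms(2)
proof (induction "is")
  case Nil then show ?case using assms(1) by (simp add: comm_group_def group.is_monoid monoid.l_one monoid.one_closed)
next
  case (Cons a as)
  interpret comm_group H by (rule assms(1))
  have c1: "foldr (\<lambda>i acc. (y i [^]\<^bsub>H\<^esub> (r i::int)) \<otimes>\<^bsub>H\<^esub> acc) as \<one>\<^bsub>H\<^esub> \<in> carrier H"
    using foldr_pow_carr[OF is_group, of as y r] Cons.prems by simp
  have c2: "foldr (\<lambda>i acc. (y i [^]\<^bsub>H\<^esub> (s i::int)) \<otimes>\<^bsub>H\<^esub> acc) as \<one>\<^bsub>H\<^esub> \<in> carrier H"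
    using foldr_pow_carr[OF is_group, of as y s] Cons.prems by simp
  have ya: "y a \<in> carrier H" using Cons by simp
  show ?case using Cons c1 c2 ya by (simp add: int_pow_mult m_ac)
qed

lemma foldr_mult_one:
  assumes "monoid G" "set xs \<subseteq> carrier G" "b \<in> carrier G"
  shows "foldr (\<otimes>\<^bsub>G\<^esub>) xs b = foldr (\<otimes>\<^bsub>G\<^esub>) xs \<one>\<^bsub>G\<^esub> \<otimes>\<^bsub>G\<^esub> b"
  using assms(2)
proof (induction xs)
  case Nil then show ?case using assms by (simp add: monoid.l_one)
next
  case (Cons a as)
  have "foldr (\<otimes>\<^bsub>G\<^esub>) as \<one>\<^bsub>G\<^esub> \<in> carrier G"
    using Cons(2) by (induction as) (auto simp: monoid.m_closed[OF assms(1)] monoid.one_closed[OF assms(1)])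
  then show ?case using Cons assms by (simp add: monoid.m_assoc)
qed

lemma foldr_mult_carr:
  assumes "monoid G" "set xs \<subseteq> carrier G"
  shows "foldr (\<otimes>\<^bsub>G\<^esub>) xs \<one>\<^bsub>G\<^esub> \<in> carrier G"
  using assms(2) by (induction xs) (auto simp: monoid.m_closed[OF assms(1)] monoid.one_closed[OF assms(1)])

lemma generate_prod:
  assumes "group G" "L \<subseteq> carrier G" "\<And>l. l \<in> L \<Longrightarrow> inv\<^bsub>G\<^esub> l \<in> L" "g \<in> generate G L"
  shows "\<exists>ls. set ls \<subseteq> L \<and> g = foldr (\<otimes>\<^bsub>G\<^esub>) ls \<one>\<^bsub>G\<^esub>"
  using assms(4)
proof (induction rule: generate.induct)
  case one then show ?case by (intro exI[of _ "[]"]) simp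
next
  case (incl h) then show ?case using assms
    by (intro exI[of _ "[h]"]) (auto simp: group.is_monoid monoid.r_one)
next
  case (inv h) then show ?case using assms
    by (intro exI[of _ "[inv\<^bsub>G\<^esub> h]"]) (auto simp: group.is_monoid monoid.r_one group.inv_closed)
next
  case (eng h1 h2)
  then obtain l1 l2 where l: "set l1 \<subseteq> L" "h1 = foldr (\<otimes>\<^bsub>G\<^esub>) l1 \<one>\<^bsub>G\<^esub>"
     "set l2 \<subseteq> L" "h2 = foldr (\<otimes>\<^bsub>G\<^esub>) l2 \<one>\<^bsub>G\<^esub>" by blast
  have m: "monoid G" using assms(1) group.is_monoid by blast
  have "foldr (\<otimes>\<^bsub>G\<^esub>) (l1 @ l2) \<one>\<^bsub>G\<^esub> = h1 \<otimes>\<^bsub>G\<^esub> h2"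
    using l foldr_mult_one[OF m, of l1 h2] foldr_mult_carr[OF m, of l2] assms(2) by auto
  then show ?case using l by (intro exI[of _ "l1 @ l2"]) auto
qed

theorem lemma1:
  fixes G (structure) and n :: nat and x :: "nat \<Rightarrow> 'a" and \<Lambda> :: "'a set"
  assumes grp: "group G"
    and x_carr: "\<And>i. i < n \<Longrightarrow> x i \<in> carrier G"
    and x_gen: "generate G (x ` {..<n}) = carrier G"
    and C_fin: "finite (derived G (carrier G))"
    and free_ab: "bij_betw (\<lambda>r. derived G (carrier G) #> gvec G n x r) (intvecs n)
                    (rcosets (derived G (carrier G)))"
    and Lam_carr: "\<Lambda> \<subseteq> carrier G"
    and Lam_gen: "generate G \<Lambda> = carrier G"
    and Lam_inv: "\<And>l. l \<in> \<Lambda> \<Longrightarrow> inv l \<in> \<Lambda>"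
  shows "\<forall>c \<in> derived G (carrier G). \<exists>ls. set ls \<subseteq>
            {link G n x (derived G (carrier G)) r lam | r lam. r \<in> intvecs n \<and> lam \<in> \<Lambda>}
          \<and> c = foldr (\<otimes>) ls \<one>"
proof -
  interpret group G by (rule grp)
  define C where "C = derived G (carrier G)"
  define Q where "Q = G Mod C"
  define h where "h = (\<lambda>a. C #> a)"
  have CN: "C \<lhd> G" unfolding C_def by (rule derived_is_normal[OF normal_self])
  interpret N: normal C G by (rule CN)
  have Qc: "comm_group Q" unfolding Q_def C_def by (rule derived_quot_is_comm_group)
  interpret Q: comm_group Q by (rule Qc)
  have hhom: "h \<in> hom G Q" unfolding h_def Q_def by (rule N.r_coset_hom_Mod)
  interpret hh: group_hom G Q h by (simp add: group_hom_def group_hom_axioms_def hhom is_group Q.is_group)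
  have Csub: "C \<subseteq> carrier G" by (rule N.subset)
  have one_Q: "\<one>\<^bsub>Q\<^esub> = C" unfolding Q_def by simp
  have hC: "a \<in> carrier G \<Longrightarrow> h a = C \<longleftrightarrow> a \<in> C" for a
    unfolding h_def using coset_join1[of C a] coset_join2[of a C] N.subgroup_axioms by blast
  have heq: "inv a \<otimes> b \<in> C \<longleftrightarrow> h a = h b" if ab: "a \<in> carrier G" "b \<in> carrier G" for a b
  proof
    assume a1: "inv a \<otimes> b \<in> C"
    have m: "inv a \<otimes> b \<in> carrier G" using ab by simp
    have "h (inv a \<otimes> b) = \<one>\<^bsub>Q\<^esub>" using hC[OF m] one_Q a1 by blast
    then have "h a \<otimes>\<^bsub>Q\<^esub> h (inv a \<otimes> b) = h a" using ab by simp
    moreover have "a \<otimes> (inv a \<otimes> b) = b" using ab by (simp add: m_assoc[symmetric])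
    ultimately show "h a = h b" using ab by (metis hh.hom_mult inv_closed m_closed)
  next
    assume "h a = h b"
    then have "h (inv a \<otimes> b) = \<one>\<^bsub>Q\<^esub>" using ab by simp
    moreover have m: "inv a \<otimes> b \<in> carrier G" using ab by simp
    ultimately show "inv a \<otimes> b \<in> C" using hC[OF m] one_Q by simp
  qed
  have xs_carr: "\<forall>i\<in>set [0..<n]. x i \<in> carrier G" using x_carr by simp
  have gvec_carr: "gvec G n x r \<in> carrier G" for r
    unfolding gvec_def by (rule foldr_pow_carr[OF grp xs_carr])
  have hxs: "\<forall>i\<in>set [0..<n]. h (x i) \<in> carrier Q" using x_carr by simp
  have hgvec: "h (gvec G n x r) = foldr (\<lambda>i acc. (h (x i) [^]\<^bsub>Q\<^esub> r i) \<otimes>\<^bsub>Q\<^esub> acc) [0..<n] \<one>\<^bsub>Q\<^esub>" for r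
    unfolding gvec_def by (rule foldr_pow_hom[OF grp Q.is_group hhom xs_carr])
  have hgadd: "h (gvec G n x (\<lambda>i. r i + s i)) = h (gvec G n x r) \<otimes>\<^bsub>Q\<^esub> h (gvec G n x s)" for r s
    unfolding hgvec by (rule foldr_pow_add[OF Qc hxs])
  have g0: "gvec G n x (\<lambda>i. 0) = \<one>"
    unfolding gvec_def by (rule foldr_pow_zero[OF is_monoid])
  have inj: "inj_on (\<lambda>r. h (gvec G n x r)) (intvecs n)"
    using free_ab unfolding bij_betw_def h_def C_def by simp
  have iv0: "(\<lambda>i. 0) \<in> intvecs n" unfolding intvecs_def by simp
  have ivadd: "a \<in> intvecs n \<Longrightarrow> b \<in> intvecs n \<Longrightarrow> (\<lambda>i. a i + b i) \<in> intvecs n" for a b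
    unfolding intvecs_def by simp
  have rv: "rvec G n x C l \<in> intvecs n \<and> h (gvec G n x (rvec G n x C l)) = h l" if l: "l \<in> carrier G" for l
  proof -
    have "h l \<in> rcosets C" unfolding h_def RCOSETS_def using l by blast
    then obtain r where r: "r \<in> intvecs n" "h (gvec G n x r) = h l"
    proof -
      have "h l \<in> (\<lambda>r. h (gvec G n x r)) ` intvecs n"
        using free_ab \<open>h l \<in> rcosets C\<close> unfolding bij_betw_def h_def C_def by simp
      then show ?thesis using that by (metis (no_types, lifting) imageE)
    qed
    have "\<exists>!r. r \<in> intvecs n \<and> inv (gvec G n x r) \<otimes> l \<in> C"
    proof (rule ex1I[of _ r])
      show "r \<in> intvecs n \<and> inv (gvec G n x r) \<otimes> l \<in> C" using r heq gvec_carr l by simp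
    next
      fix r' assume "r' \<in> intvecs n \<and> inv (gvec G n x r') \<otimes> l \<in> C"
      then have "r' \<in> intvecs n" "h (gvec G n x r') = h (gvec G n x r)" using r heq gvec_carr l by auto
      then show "r' = r" using inj r(1) unfolding inj_on_def by blast
    qed
    from theI'[OF this] show ?thesis unfolding rvec_def using heq gvec_carr l by simp
  qed
  define R where "R = (\<lambda>ls. foldr (\<lambda>l r i. r i + rvec G n x C l i) ls (\<lambda>i. 0))"
  have R_Nil: "R [] = (\<lambda>i. 0)" unfolding R_def by simp
  have R_Cons: "R (l # ls) = (\<lambda>i. R ls i + rvec G n x C l i)" for l ls unfolding R_def by simp
  define Links where "Links = {link G n x C r lam | r lam. r \<in> intvecs n \<and> lam \<in> \<Lambda>}"
  have Riv: "set ls \<subseteq> \<Lambda> \<Longrightarrow> R ls \<in> intvecs n" for ls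
  proof (induction ls)
    case Nil then show ?case using R_Nil iv0 by simp
  next
    case (Cons l ls) then show ?case using R_Cons ivadd rv Lam_carr by auto
  qed
  have tele: "set ls \<subseteq> \<Lambda> \<Longrightarrow> \<exists>L. set L \<subseteq> Links \<and> foldr (\<otimes>) L \<one> = inv (gvec G n x (R ls)) \<otimes> foldr (\<otimes>) ls \<one>" for ls
  proof (induction ls)
    case Nil then show ?case using R_Nil g0 by (intro exI[of _ "[]"]) simp
  next
    case (Cons l ls)
    then obtain L where L: "set L \<subseteq> Links" "foldr (\<otimes>) L \<one> = inv (gvec G n x (R ls)) \<otimes> foldr (\<otimes>) ls \<one>" by auto
    have lc: "l \<in> carrier G" using Cons.prems Lam_carr by auto
    have Pc: "foldr (\<otimes>) ls \<one> \<in> carrier G" using foldr_mult_carr[OF is_monoid, of ls] Cons.prems Lam_carr by auto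
    define lk where "lk = link G n x C (R ls) l"
    have lkL: "lk \<in> Links" unfolding lk_def Links_def using Riv Cons.prems by auto
    have "lk \<otimes> foldr (\<otimes>) L \<one> = inv (gvec G n x (R (l # ls))) \<otimes> (l \<otimes> foldr (\<otimes>) ls \<one>)"
      unfolding L(2) lk_def link_def R_Cons using gvec_carr lc Pc
      by (simp add: m_assoc[symmetric]) (simp add: m_assoc)
    then show ?case using L lkL by (intro exI[of _ "lk # L"]) simp
  qed
  have hR: "set ls \<subseteq> \<Lambda> \<Longrightarrow> h (gvec G n x (R ls)) = h (foldr (\<otimes>) ls \<one>)" for ls
  proof (induction ls)
    case Nil then show ?case using R_Nil g0 by simp
  next
    case (Cons l ls)
    have lc: "l \<in> carrier G" using Cons.prems Lam_carr by auto
    have Pc: "foldr (\<otimes>) ls \<one> \<in> carrier G" using foldr_mult_carr[OF is_monoid, of ls] Cons.prems Lam_carr by auto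
    have "h (gvec G n x (R (l # ls))) = h (foldr (\<otimes>) ls \<one>) \<otimes>\<^bsub>Q\<^esub> h l"
      unfolding R_Cons hgadd using Cons rv[OF lc] by simp
    also have "\<dots> = h l \<otimes>\<^bsub>Q\<^esub> h (foldr (\<otimes>) ls \<one>)" using lc Pc by (simp add: Q.m_comm)
    also have "\<dots> = h (foldr (\<otimes>) (l # ls) \<one>)" using lc Pc by simp
    finally show ?case .
  qed
  have main: "\<exists>L. set L \<subseteq> Links \<and> c = foldr (\<otimes>) L \<one>" if c: "c \<in> C" for c
  proof -
    have cc: "c \<in> carrier G" using c Csub by auto
    then obtain ls where ls: "set ls \<subseteq> \<Lambda>" "c = foldr (\<otimes>) ls \<one>"
      using generate_prod[OF grp Lam_carr Lam_inv, of c] Lam_gen by auto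
    obtain L where L: "set L \<subseteq> Links" "foldr (\<otimes>) L \<one> = inv (gvec G n x (R ls)) \<otimes> c"
      using tele[OF ls(1)] ls(2) by auto
    have "h (gvec G n x (R ls)) = h (gvec G n x (\<lambda>i. 0))"
      using hR[OF ls(1)] ls(2)[symmetric] hC cc c g0 hC[of \<one>] by simp
    then have "R ls = (\<lambda>i. 0)" using inj Riv[OF ls(1)] iv0 unfolding inj_on_def by blast
    then have "foldr (\<otimes>) L \<one> = c" using L(2) g0 cc by simp
    then show ?thesis using L(1) by auto
  qed
  then show ?thesis unfolding Links_def C_def by blast
qed

end
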